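(* Let $Q$ be a finite right Bol loop of odd order and let $H$ be a subgroup of $N_\lambda(Q)$ of order $3$. Suppose that $T_x(H)\subseteq H$ for all $x\in Q$. Then $H\subseteq C(Q)$, i.e. every element of $H$ commutes with every element of $Q$.
   Context: A loop is a set with a binary multiplication and a two-sided identity $1$ in which all left and right translations $L_x(y)=xy$, $R_x(y)=yx$ are bijections. A loop is right Bol if it satisfies $((xy)z)y=x((yz)y)$ for all $x,y,z$. For $x\in Q$, $T_x=L_x^{-1}R_x$, so $T_x(y)=x\backslash(yx)$. The left nucleus is $N_\lambda(Q)=\{x\in Q: x\cdot yz=xy\cdot z \text{ for all } y,z\in Q\}$. The commutant is $C(Q)=\{x\in Q: xy=yx\text{ for all }y\in Q\}$. *)

theory Defs
  imports Main
begin

definition loop :: "'a set \<Rightarrow> ('a \<Rightarrow> 'a \<Rightarrow> 'a) \<Rightarrow> 'a \<Rightarrow> bool" where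
  "loop Q m e \<longleftrightarrow>
     (\<forall>x\<in>Q. \<forall>y\<in>Q. m x y \<in> Q) \<and> e \<in> Q \<and>
     (\<forall>x\<in>Q. m e x = x \<and> m x e = x) \<and>
     (\<forall>x\<in>Q. bij_betw (\<lambda>y. m x y) Q Q) \<and>
     (\<forall>x\<in>Q. bij_betw (\<lambda>y. m y x) Q Q)"

definition right_bol :: "'a set \<Rightarrow> ('a \<Rightarrow> 'a \<Rightarrow> 'a) \<Rightarrow> bool" where
  "right_bol Q m \<longleftrightarrow>
     (\<forall>x\<in>Q. \<forall>y\<in>Q. \<forall>z\<in>Q. m (m (m x y) z) y = m x (m (m y z) y))"

definition ldiv :: "'a set \<Rightarrow> ('a \<Rightarrow> 'a \<Rightarrow> 'a) \<Rightarrow> 'a \<Rightarrow> 'a \<Rightarrow> 'a" where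
  "ldiv Q m x z = (THE y. y \<in> Q \<and> m x y = z)"

text \<open>T_x = L_x^{-1} R_x, so T_x(y) = x \ (y x).\<close>
definition T_map :: "'a set \<Rightarrow> ('a \<Rightarrow> 'a \<Rightarrow> 'a) \<Rightarrow> 'a \<Rightarrow> 'a \<Rightarrow> 'a" where
  "T_map Q m x y = ldiv Q m x (m y x)"

definition left_nucleus :: "'a set \<Rightarrow> ('a \<Rightarrow> 'a \<Rightarrow> 'a) \<Rightarrow> 'a set" where
  "left_nucleus Q m = {x \<in> Q. \<forall>y\<in>Q. \<forall>z\<in>Q. m x (m y z) = m (m x y) z}"

definition commutant :: "'a set \<Rightarrow> ('a \<Rightarrow> 'a \<Rightarrow> 'a) \<Rightarrow> 'a set" where
  "commutant Q m = {x \<in> Q. \<forall>y\<in>Q. m x y = m y x}"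

definition subloop_group :: "'a set \<Rightarrow> ('a \<Rightarrow> 'a \<Rightarrow> 'a) \<Rightarrow> 'a \<Rightarrow> 'a set \<Rightarrow> bool" where
  "subloop_group Q m e H \<longleftrightarrow>
     H \<subseteq> Q \<and> e \<in> H \<and> (\<forall>x\<in>H. \<forall>y\<in>H. m x y \<in> H) \<and>
     (\<forall>x\<in>H. \<forall>y\<in>H. \<forall>z\<in>H. m x (m y z) = m (m x y) z) \<and>
     (\<forall>x\<in>H. \<exists>y\<in>H. m x y = e \<and> m y x = e)"

end

theory Submission
  imports Defs
begin

lemma key:
  assumes L: "loop Q m e" and B: "right_bol Q m" and fin: "finite Q" and od: "odd (card Q)"
    and HQ: "H \<subseteq> Q" and HN: "H \<subseteq> left_nucleus Q m"
    and hH: "h \<in> H" and gH: "g \<in> H" and he: "h \<noteq> e" and gh: "g \<noteq> h"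
    and hh: "m h h = g" and ghe: "m g h = e" and gg: "m g g = h"
    and Hsub: "H \<subseteq> {e,h,g}"
    and T: "\<forall>x\<in>Q. T_map Q m x h \<in> H"
  shows "\<forall>x\<in>Q. m h x = m x h"
proof -
  have cl: "\<And>x y. x\<in>Q \<Longrightarrow> y\<in>Q \<Longrightarrow> m x y \<in> Q" using L unfolding loop_def by blast
  have eQ: "e \<in> Q" using L unfolding loop_def by blast
  have lid: "\<And>x. x\<in>Q \<Longrightarrow> m e x = x" and rid: "\<And>x. x\<in>Q \<Longrightarrow> m x e = x"
    using L unfolding loop_def by blast+
  have lbij: "\<And>x. x\<in>Q \<Longrightarrow> bij_betw (\<lambda>y. m x y) Q Q" using L unfolding loop_def by blast
  have rbij: "\<And>x. x\<in>Q \<Longrightarrow> bij_betw (\<lambda>y. m y x) Q Q" using L unfolding loop_def by blast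
  have lcan: "\<And>x y z. x\<in>Q \<Longrightarrow> y\<in>Q \<Longrightarrow> z\<in>Q \<Longrightarrow> m x y = m x z \<Longrightarrow> y = z"
  proof -
    fix x y z assume a: "x\<in>Q" "y\<in>Q" "z\<in>Q" "m x y = m x z"
    have "inj_on (\<lambda>y. m x y) Q" using lbij[OF a(1)] bij_betw_imp_inj_on by blast
    thus "y = z" using a unfolding inj_on_def by blast
  qed
  have rcan: "\<And>x y z. x\<in>Q \<Longrightarrow> y\<in>Q \<Longrightarrow> z\<in>Q \<Longrightarrow> m y x = m z x \<Longrightarrow> y = z"
  proof -
    fix x y z assume a: "x\<in>Q" "y\<in>Q" "z\<in>Q" "m y x = m z x"
    have "inj_on (\<lambda>y. m y x) Q" using rbij[OF a(1)] bij_betw_imp_inj_on by blast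
    thus "y = z" using a unfolding inj_on_def by blast
  qed
  have lsolve: "\<And>x z. x\<in>Q \<Longrightarrow> z\<in>Q \<Longrightarrow> \<exists>y\<in>Q. m x y = z"
    using lbij bij_betw_imp_surj_on by (metis imageE)
  have bol: "\<And>x y z. x\<in>Q \<Longrightarrow> y\<in>Q \<Longrightarrow> z\<in>Q \<Longrightarrow> m (m (m x y) z) y = m x (m (m y z) y)"
    using B unfolding right_bol_def by blast
  have hQ: "h \<in> Q" and gQ: "g \<in> Q" using hH gH HQ by auto
  have hN: "\<And>y z. y\<in>Q \<Longrightarrow> z\<in>Q \<Longrightarrow> m h (m y z) = m (m h y) z"
    using hH HN unfolding left_nucleus_def by blast
  have I1: "\<And>a. a\<in>Q \<Longrightarrow> m (m a h) h = m a g"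
  proof -
    fix a assume a: "a\<in>Q"
    have "m (m (m a h) e) h = m a (m (m h e) h)" using bol[OF a hQ eQ] .
    thus "m (m a h) h = m a g" using rid[OF hQ] rid[OF cl[OF a hQ]] hh by simp
  qed
  have I2: "\<And>a. a\<in>Q \<Longrightarrow> m (m a g) h = a"
  proof -
    fix a assume a: "a\<in>Q"
    have "m (m (m a h) h) h = m a (m (m h h) h)" using bol[OF a hQ hQ] .
    thus "m (m a g) h = a" using I1[OF a] hh ghe rid[OF a] by simp
  qed
  have I2': "\<And>w. w\<in>Q \<Longrightarrow> m (m w h) g = w"
  proof -
    fix w assume w: "w\<in>Q"
    have "m (m (m w h) g) h = m w h" using I2[OF cl[OF w hQ]] .
    thus "m (m w h) g = w" using rcan[OF hQ cl[OF cl[OF w hQ] gQ] w] by simp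
  qed
  have I5: "\<And>w. w\<in>Q \<Longrightarrow> m (m w g) g = m w h"
  proof -
    fix a assume a: "a\<in>Q"
    have "m (m (m a g) e) g = m a (m (m g e) g)" using bol[OF a gQ eQ] .
    thus "m (m a g) g = m a h" using rid[OF gQ] rid[OF cl[OF a gQ]] gg by simp
  qed
  define Bs where "Bs = {x\<in>Q. m h x \<noteq> m x h}"
  define As where "As = {x\<in>Q. m h x = m x h}"
  have Bg: "\<And>z. z \<in> Bs \<Longrightarrow> m h z = m z g"
  proof -
    fix z assume z: "z \<in> Bs"
    hence zQ: "z\<in>Q" and nz: "m h z \<noteq> m z h" unfolding Bs_def by auto
    define t where "t = T_map Q m z h"
    have ex1: "\<exists>!y. y \<in> Q \<and> m z y = m h z"
    proof -
      obtain y where y: "y\<in>Q" "m z y = m h z" using lsolve[OF zQ cl[OF hQ zQ]] by blast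
      show ?thesis
      proof (rule ex1I[of _ y])
        show "y \<in> Q \<and> m z y = m h z" using y by simp
        fix y' assume "y' \<in> Q \<and> m z y' = m h z"
        thus "y' = y" using lcan[OF zQ, of y' y] y by simp
      qed
    qed
    have t: "t \<in> Q \<and> m z t = m h z" unfolding t_def T_map_def ldiv_def using theI'[OF ex1] .
    have "t \<in> H" using T zQ t_def by blast
    hence "t = e \<or> t = h \<or> t = g" using Hsub by blast
    moreover have "t \<noteq> e"
    proof
      assume "t = e"
      hence "m h z = m e z" using t rid[OF zQ] lid[OF zQ] by simp
      thus False using rcan[OF zQ hQ eQ] he by blast
    qed
    moreover have "t \<noteq> h" using t nz by auto
    ultimately show "m h z = m z g" using t by auto
  qed
  have I3: "\<And>a z. a\<in>Q \<Longrightarrow> z \<in> Bs \<Longrightarrow> m (m a h) z = m (m a z) g"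
  proof -
    fix a z assume a: "a\<in>Q" and z: "z \<in> Bs"
    have zQ: "z\<in>Q" using z Bs_def by auto
    have "m (m (m a h) z) h = m a (m (m h z) h)" using bol[OF a hQ zQ] .
    also have "\<dots> = m a z" using Bg[OF z] I2[OF zQ] by simp
    finally have e1: "m (m (m a h) z) h = m a z" .
    have "m (m (m (m a h) z) h) g = m (m a h) z" using I2'[OF cl[OF cl[OF a hQ] zQ]] .
    thus "m (m a h) z = m (m a z) g" using e1 by simp
  qed
  have I4: "\<And>a z. a\<in>Q \<Longrightarrow> z \<in> Bs \<Longrightarrow> m (m a g) z = m (m a z) h"
  proof -
    fix a z assume a: "a\<in>Q" and z: "z \<in> Bs"
    have zQ: "z\<in>Q" using z Bs_def by auto
    have "m (m a g) z = m (m (m a h) h) z" using I1[OF a] by simp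
    also have "\<dots> = m (m (m a h) z) g" using I3[OF cl[OF a hQ] z] .
    also have "\<dots> = m (m (m a z) g) g" using I3[OF a z] by simp
    also have "\<dots> = m (m a z) h" using I5[OF cl[OF a zQ]] .
    finally show "m (m a g) z = m (m a z) h" .
  qed
  show ?thesis
  proof (rule ccontr)
    assume "\<not> ?thesis"
    then obtain x where xQ: "x\<in>Q" and xB: "x \<in> Bs" unfolding Bs_def by auto
    have AB: "\<And>y. y \<in> As \<Longrightarrow> m y x \<in> Bs"
    proof -
      fix y assume y: "y \<in> As"
      hence yQ: "y\<in>Q" and hy: "m h y = m y h" unfolding As_def by auto
      have "m h (m y x) = m (m y x) g" using hN[OF yQ xQ] hy I3[OF yQ xB] by simp
      moreover have "m (m y x) g \<noteq> m (m y x) h" using lcan[OF cl[OF yQ xQ] gQ hQ] gh by blast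
      ultimately show "m y x \<in> Bs" unfolding Bs_def using cl[OF yQ xQ] by auto
    qed
    have BA: "\<And>y. y \<in> Bs \<Longrightarrow> m y x \<in> As"
    proof -
      fix y assume y: "y \<in> Bs"
      hence yQ: "y\<in>Q" unfolding Bs_def by auto
      have "m h (m y x) = m (m y x) h" using hN[OF yQ xQ] Bg[OF y] I4[OF yQ xB] by simp
      thus "m y x \<in> As" unfolding As_def using cl[OF yQ xQ] by auto
    qed
    have inj: "inj_on (\<lambda>y. m y x) Q" using rbij[OF xQ] bij_betw_imp_inj_on by blast
    have fA: "finite As" and fB: "finite Bs" using fin unfolding As_def Bs_def by auto
    have "card ((\<lambda>y. m y x) ` As) = card As"
      by (rule card_image, rule inj_on_subset[OF inj], auto simp: As_def)
    moreover have "(\<lambda>y. m y x) ` As \<subseteq> Bs" using AB by auto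
    ultimately have c1: "card As \<le> card Bs" using card_mono[OF fB] by metis
    have "card ((\<lambda>y. m y x) ` Bs) = card Bs"
      by (rule card_image, rule inj_on_subset[OF inj], auto simp: Bs_def)
    moreover have "(\<lambda>y. m y x) ` Bs \<subseteq> As" using BA by auto
    ultimately have c2: "card Bs \<le> card As" using card_mono[OF fA] by metis
    have "Q = As \<union> Bs" "As \<inter> Bs = {}" unfolding As_def Bs_def by auto
    hence "card Q = card As + card Bs" using card_Un_disjoint[OF fA fB] by simp
    hence "card Q = 2 * card As" using c1 c2 by simp
    thus False using od by simp
  qed
qed

theorem lemma4p10:
  fixes Q :: "'a set" and m :: "'a \<Rightarrow> 'a \<Rightarrow> 'a" and e :: 'a and H :: "'a set"
  assumes "loop Q m e"
    and "right_bol Q m"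
    and "finite Q"
    and "odd (card Q)"
    and "subloop_group Q m e H"
    and "H \<subseteq> left_nucleus Q m"
    and "card H = 3"
    and "\<forall>x\<in>Q. T_map Q m x ` H \<subseteq> H"
  shows "H \<subseteq> commutant Q m"
proof
  fix h assume hH: "h \<in> H"
  have HQ: "H \<subseteq> Q" and eH: "e \<in> H" and Hcl: "\<forall>x\<in>H. \<forall>y\<in>H. m x y \<in> H"
    and Has: "\<forall>x\<in>H. \<forall>y\<in>H. \<forall>z\<in>H. m x (m y z) = m (m x y) z"
    using assms(5) unfolding subloop_group_def by auto
  have cl: "\<And>x y. x\<in>Q \<Longrightarrow> y\<in>Q \<Longrightarrow> m x y \<in> Q" using assms(1) unfolding loop_def by blast
  have eQ: "e \<in> Q" using assms(1) unfolding loop_def by blast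
  have lid: "\<And>x. x\<in>Q \<Longrightarrow> m e x = x" and rid: "\<And>x. x\<in>Q \<Longrightarrow> m x e = x"
    using assms(1) unfolding loop_def by blast+
  have lbij: "\<And>x. x\<in>Q \<Longrightarrow> bij_betw (\<lambda>y. m x y) Q Q" using assms(1) unfolding loop_def by blast
  have rbij: "\<And>x. x\<in>Q \<Longrightarrow> bij_betw (\<lambda>y. m y x) Q Q" using assms(1) unfolding loop_def by blast
  have lcan: "\<And>x y z. x\<in>Q \<Longrightarrow> y\<in>Q \<Longrightarrow> z\<in>Q \<Longrightarrow> m x y = m x z \<Longrightarrow> y = z"
  proof -
    fix x y z assume a: "x\<in>Q" "y\<in>Q" "z\<in>Q" "m x y = m x z"
    have "inj_on (\<lambda>y. m x y) Q" using lbij[OF a(1)] bij_betw_imp_inj_on by blast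
    thus "y = z" using a unfolding inj_on_def by blast
  qed
  have rcan: "\<And>x y z. x\<in>Q \<Longrightarrow> y\<in>Q \<Longrightarrow> z\<in>Q \<Longrightarrow> m y x = m z x \<Longrightarrow> y = z"
  proof -
    fix x y z assume a: "x\<in>Q" "y\<in>Q" "z\<in>Q" "m y x = m z x"
    have "inj_on (\<lambda>y. m y x) Q" using rbij[OF a(1)] bij_betw_imp_inj_on by blast
    thus "y = z" using a unfolding inj_on_def by blast
  qed
  have hQ: "h \<in> Q" using hH HQ by auto
  show "h \<in> commutant Q m"
  proof (cases "h = e")
    case True thus ?thesis unfolding commutant_def using lid rid eQ by auto
  next
    case he: False
    define g where "g = m h h"
    have gH: "g \<in> H" using Hcl hH g_def by auto
    have gQ: "g \<in> Q" using gH HQ by auto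
    have gh: "g \<noteq> h"
    proof
      assume "g = h"
      hence "m h h = m e h" using g_def lid[OF hQ] by simp
      thus False using rcan[OF hQ hQ eQ] he by blast
    qed
    have ge: "g \<noteq> e"
    proof
      assume g0: "g = e"
      obtain k where k: "k \<in> H" "k \<noteq> e" "k \<noteq> h"
      proof -
        have "\<not> H \<subseteq> {e,h}"
        proof
          assume "H \<subseteq> {e,h}"
          hence "card H \<le> card {e,h}" by (simp add: card_mono)
          also have "\<dots> \<le> 2" by (simp add: card_insert_le_m1)
          finally show False using assms(7) by simp
        qed
        thus ?thesis using that by blast
      qed
      have kQ: "k\<in>Q" using k HQ by auto
      have fH: "finite H" using assms(7) card.infinite by fastforce
      have Hk: "H = {e,h,k}"
      proof -
        have "card {e,h,k} = 3" using he k by auto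
        moreover have "{e,h,k} \<subseteq> H" using eH hH k by auto
        ultimately show ?thesis using assms(7) fH card_subset_eq by metis
      qed
      have "m h k \<in> H" using Hcl hH k by auto
      moreover have "m h k \<noteq> e"
      proof
        assume "m h k = e" hence "m h k = m h h" using g0 g_def by simp
        thus False using lcan[OF hQ kQ hQ] k by blast
      qed
      moreover have "m h k \<noteq> h"
      proof
        assume "m h k = h" hence "m h k = m h e" using rid[OF hQ] by simp
        thus False using lcan[OF hQ kQ eQ] k by blast
      qed
      moreover have "m h k \<noteq> k"
      proof
        assume "m h k = k" hence "m h k = m e k" using lid[OF kQ] by simp
        thus False using rcan[OF kQ hQ eQ] he by blast
      qed
      ultimately show False using Hk by blast
    qed
    have Hsub: "H \<subseteq> {e,h,g}"
    proof -
      have "card {e,h,g} = 3" using he ge gh by auto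
      moreover have "{e,h,g} \<subseteq> H" using eH hH gH by auto
      moreover have "finite H" using assms(7) card.infinite by fastforce
      ultimately show ?thesis using assms(7) card_subset_eq[of H "{e,h,g}"] by simp
    qed
    have hg: "m h g = e"
    proof -
      have "m h g \<in> H" using Hcl hH gH by auto
      moreover have "m h g \<noteq> h"
      proof
        assume "m h g = h" hence "m h g = m h e" using rid[OF hQ] by simp
        thus False using lcan[OF hQ gQ eQ] ge by blast
      qed
      moreover have "m h g \<noteq> g"
      proof
        assume "m h g = g" hence "m h g = m e g" using lid[OF gQ] by simp
        thus False using rcan[OF gQ hQ eQ] he by blast
      qed
      ultimately show ?thesis using Hsub by blast
    qed
    have ghe: "m g h = e"
    proof -
      have "m (m h h) h = m h (m h h)" using Has hH by simp
      thus ?thesis using hg g_def by simp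
    qed
    have gg: "m g g = h"
    proof -
      have "m (m h h) g = m h (m h g)" using Has hH gH by simp
      thus ?thesis using hg g_def rid[OF hQ] by simp
    qed
    have T: "\<forall>x\<in>Q. T_map Q m x h \<in> H" using assms(8) hH by blast
    have "\<forall>x\<in>Q. m h x = m x h"
      using key[OF assms(1-4) HQ assms(6) hH gH he gh g_def[symmetric] ghe gg Hsub T] .
    thus ?thesis unfolding commutant_def using hQ by auto
  qed
qed

end
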